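(* A sequence $\mathfrak{f}\in\mathfrak{M}_4$ belongs to $\mathfrak{S}_4$ if and only if $$\mathfrak{f}=\alpha_{11}\mathfrak{p}_{(1^4)}+2\alpha_{12}\mathfrak{p}_{(2,1^2)}+\alpha_{22}\mathfrak{p}_{(2^2)}+\beta_{11}\left(\mathfrak{p}_{(2,1^2)}-\mathfrak{p}_{(1^4)}\right)+2\beta_{12}\left(\mathfrak{p}_{(3,1)}-\mathfrak{p}_{(2,1^2)}\right)+\beta_{22}\left(\mathfrak{p}_{(4)}-\mathfrak{p}_{(2^2)}\right)$$ for some real numbers such that $\begin{pmatrix}\alpha_{11}&\alpha_{12}\\ \alpha_{12}&\alpha_{22}\end{pmatrix}$ and $\begin{pmatrix}\beta_{11}&\beta_{12}\\ \beta_{12}&\beta_{22}\end{pmatrix}$ are positive semidefinite.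
   Context: $p^{(n)}_i=\frac1n(x_1^i+\dots+x_n^i)$, $p^{(n)}_\lambda=\prod_i p^{(n)}_{\lambda_i}$ for a partition $\lambda$ of $4$. For $\lambda\vdash 4$, $\mathfrak{p}_\lambda$ denotes the sequence $(p^{(4)}_\lambda,p^{(5)}_\lambda,\dots)$, and $\mathfrak{M}_4$ is the 5-dimensional real vector space of sequences $\mathfrak{f}=\sum_{\lambda\vdash4}c_\lambda\mathfrak{p}_\lambda$, i.e. $\mathfrak{f}=(f^{(n)})_{n\ge4}$ with $f^{(n)}=\sum_\lambda c_\lambda p^{(n)}_\lambda$. $\mathfrak{S}_4$ is the set of $\mathfrak{f}\in\mathfrak{M}_4$ such that $f^{(n)}$ is a sum of squares of real forms for every $n\ge 4$. *)

theory Defs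
  imports Complex_Main
begin

text \<open>Points of R^n are represented as functions x :: nat => real; only the
coordinates x 0, ..., x (n-1) (i.e. x_1, ..., x_n) are used.\<close>

definition monom :: "nat \<Rightarrow> (nat \<Rightarrow> nat) \<Rightarrow> (nat \<Rightarrow> real) \<Rightarrow> real" where
  "monom n a x = (\<Prod>i<n. x i ^ a i)"

definition is_form :: "nat \<Rightarrow> nat \<Rightarrow> ((nat \<Rightarrow> real) \<Rightarrow> real) \<Rightarrow> bool" where
  "is_form n d g \<longleftrightarrow>
     (\<exists>S :: (nat \<Rightarrow> nat) set. \<exists>c :: (nat \<Rightarrow> nat) \<Rightarrow> real.
        finite S \<and> (\<forall>a\<in>S. (\<forall>i. n \<le> i \<longrightarrow> a i = 0) \<and> (\<Sum>i<n. a i) = d) \<and>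
        (\<forall>x. g x = (\<Sum>a\<in>S. c a * monom n a x)))"

definition is_sos :: "nat \<Rightarrow> ((nat \<Rightarrow> real) \<Rightarrow> real) \<Rightarrow> bool" where
  "is_sos n f \<longleftrightarrow>
     (\<exists>gs :: ((nat \<Rightarrow> real) \<Rightarrow> real) list.
        (\<forall>g\<in>set gs. \<exists>d. is_form n d g) \<and> (\<forall>x. f x = (\<Sum>g\<leftarrow>gs. (g x)^2)))"

definition psum :: "nat \<Rightarrow> nat \<Rightarrow> (nat \<Rightarrow> real) \<Rightarrow> real" where
  "psum n i x = (1 / real n) * (\<Sum>j<n. x j ^ i)"

definition p_4 :: "nat \<Rightarrow> (nat \<Rightarrow> real) \<Rightarrow> real" where
  "p_4 n x = psum n 4 x"
definition p_31 :: "nat \<Rightarrow> (nat \<Rightarrow> real) \<Rightarrow> real" where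
  "p_31 n x = psum n 3 x * psum n 1 x"
definition p_22 :: "nat \<Rightarrow> (nat \<Rightarrow> real) \<Rightarrow> real" where
  "p_22 n x = psum n 2 x * psum n 2 x"
definition p_211 :: "nat \<Rightarrow> (nat \<Rightarrow> real) \<Rightarrow> real" where
  "p_211 n x = psum n 2 x * psum n 1 x * psum n 1 x"
definition p_1111 :: "nat \<Rightarrow> (nat \<Rightarrow> real) \<Rightarrow> real" where
  "p_1111 n x = psum n 1 x * psum n 1 x * psum n 1 x * psum n 1 x"

definition mseq :: "real \<Rightarrow> real \<Rightarrow> real \<Rightarrow> real \<Rightarrow> real \<Rightarrow> nat \<Rightarrow> (nat \<Rightarrow> real) \<Rightarrow> real" where
  "mseq c4 c31 c22 c211 c1111 n x =
     c4 * p_4 n x + c31 * p_31 n x + c22 * p_22 n x + c211 * p_211 n x + c1111 * p_1111 n x"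

definition in_S4 :: "(nat \<Rightarrow> (nat \<Rightarrow> real) \<Rightarrow> real) \<Rightarrow> bool" where
  "in_S4 f \<longleftrightarrow> (\<forall>n\<ge>4. is_sos n (f n))"

text \<open>Positive semidefiniteness of the symmetric matrix [[a, b], [b, c]].\<close>
definition psd2 :: "real \<Rightarrow> real \<Rightarrow> real \<Rightarrow> bool" where
  "psd2 a b c \<longleftrightarrow> (\<forall>u v. 0 \<le> a * u^2 + 2 * b * u * v + c * v^2)"

end

theory Submission
  imports Defs
begin


definition mom :: "real \<Rightarrow> real \<Rightarrow> real \<Rightarrow> nat \<Rightarrow> real" where
  "mom p a b i = p * a^i + (1-p) * b^i"

definition HH :: "real \<Rightarrow> real \<Rightarrow> real \<Rightarrow> real \<Rightarrow> real \<Rightarrow> real \<Rightarrow> real \<Rightarrow> real \<Rightarrow> real" where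
  "HH c4 c31 c22 c211 c1111 p a b = c4 * mom p a b 4 + c31 * (mom p a b 3 * mom p a b 1)
     + c22 * (mom p a b 2 * mom p a b 2) + c211 * (mom p a b 2 * mom p a b 1 * mom p a b 1)
     + c1111 * (mom p a b 1 * mom p a b 1 * mom p a b 1 * mom p a b 1)"

lemma sum_two:
  fixes a b :: real
  assumes "k \<le> n"
  shows "(\<Sum>j<n. (if j < k then a else b) ^ i) = real k * a^i + (real n - real k) * b^i"
proof -
  have "(\<Sum>j<n. (if j < k then a else b) ^ i) = (\<Sum>j<n. if j < k then a^i else b^i)"
    by (rule sum.cong) auto
  also have "\<dots> = (\<Sum>j\<in>{..<k}. a^i) + (\<Sum>j\<in>{k..<n}. b^i)"
  proof -
    have e1: "{..<n} \<inter> {j. j<k} = {..<k}" using assms by auto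
    have e2: "{..<n} \<inter> - {j. j<k} = {k..<n}" by auto
    show ?thesis by (simp add: sum.If_cases e1 e2)
  qed
  finally show ?thesis using assms by (simp add: of_nat_diff)
qed

lemma psum_two:
  assumes "k \<le> n" "0 < n"
  shows "psum n i (\<lambda>j. if j < k then a else b) = mom (real k / real n) a b i"
  using assms unfolding psum_def mom_def sum_two[OF assms(1)]
  by (simp add: field_simps)

lemma mseq_two:
  assumes "k \<le> n" "0 < n"
  shows "mseq c4 c31 c22 c211 c1111 n (\<lambda>j. if j < k then a else b) = HH c4 c31 c22 c211 c1111 (real k / real n) a b"
  unfolding mseq_def HH_def p_4_def p_31_def p_22_def p_211_def p_1111_def psum_two[OF assms] ..

lemma HH_dense:
  assumes nn: "\<And>n k a b. n \<ge> 4 \<Longrightarrow> k \<le> n \<Longrightarrow> 0 \<le> HH c4 c31 c22 c211 c1111 (real k / real n) a b"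
    and p: "0 \<le> p" "p \<le> 1"
  shows "0 \<le> HH c4 c31 c22 c211 c1111 p a b"
proof -
  define s where "s n = real (nat \<lfloor>p * real n\<rfloor>) / real n" for n :: nat
  have s_lim: "s \<longlonglongrightarrow> p"
  proof -
    have bnd: "\<bar>s n - p\<bar> \<le> 1 / real n" if "n > 0" for n
    proof -
      have fl: "real (nat \<lfloor>p * real n\<rfloor>) = of_int \<lfloor>p * real n\<rfloor>"
        using p by simp
      have "of_int \<lfloor>p * real n\<rfloor> \<le> p * real n" "p * real n < of_int \<lfloor>p * real n\<rfloor> + 1"
        by linarith+
      moreover have "p * real n * real n \<le> (of_int \<lfloor>p * real n\<rfloor> + 1) * real n"
        using calculation(2) by (intro mult_right_mono) auto
      moreover have "of_int \<lfloor>p * real n\<rfloor> * real n \<le> p * real n * real n"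
        using calculation(1) by (intro mult_right_mono) auto
      ultimately show ?thesis using that unfolding s_def fl
        by (simp add: abs_le_iff field_simps)
    qed
    have "(\<lambda>n. 1 / real n) \<longlonglongrightarrow> 0" by (rule lim_const_over_n)
    then have l1: "(\<lambda>n. p - 1 / real n) \<longlonglongrightarrow> p" and l2: "(\<lambda>n. p + 1 / real n) \<longlonglongrightarrow> p"
      using tendsto_diff[OF tendsto_const[of p] \<open>(\<lambda>n. 1 / real n) \<longlonglongrightarrow> 0\<close>]
        tendsto_add[OF tendsto_const[of p] \<open>(\<lambda>n. 1 / real n) \<longlonglongrightarrow> 0\<close>] by auto
    have b1: "p - 1 / real n \<le> s n" and b2: "s n \<le> p + 1 / real n" if "n \<ge> 1" for n
      using bnd[of n] that unfolding abs_le_iff by linarith+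
    show ?thesis
      by (rule tendsto_sandwich[OF _ _ l1 l2]) (use b1 b2 in \<open>auto intro: eventually_sequentiallyI[of 1]\<close>)
  qed
  have "(\<lambda>n. HH c4 c31 c22 c211 c1111 (s n) a b) \<longlonglongrightarrow> HH c4 c31 c22 c211 c1111 p a b"
    unfolding HH_def mom_def by (intro tendsto_intros s_lim)
  moreover have "\<forall>n\<ge>4. 0 \<le> HH c4 c31 c22 c211 c1111 (s n) a b"
  proof (intro allI impI)
    fix n :: nat assume "n \<ge> 4"
    have "nat \<lfloor>p * real n\<rfloor> \<le> n"
    proof -
      have "\<lfloor>p * real n\<rfloor> \<le> \<lfloor>real n\<rfloor>" using p by (intro floor_mono) (simp add: mult_left_le_one_le)
      then show ?thesis by simp
    qed
    then show "0 \<le> HH c4 c31 c22 c211 c1111 (s n) a b" unfolding s_def using nn \<open>n \<ge> 4\<close> by blast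
  qed
  ultimately show ?thesis by (intro LIMSEQ_le_const) auto
qed



lemma HH_param:
  "HH c4 c31 c22 c211 c1111 p (m + (1-p)*d) (m - p*d) =
    (c1111+c211+c31+c22+c4) * m^4 + (c211+c31+2*(c22+c4)) * m^2 * (p*(1-p)*d^2)
    + (c22+c4) * (p*(1-p)*d^2)^2 + (p*(1-p)*d^2) * (c31*m*((1-2*p)*d + 2*m) + c4*((1-2*p)*d + 2*m)^2)"
  unfolding HH_def mom_def by algebra

lemma GL:
  assumes H: "\<And>p a b. 0 \<le> p \<Longrightarrow> p \<le> 1 \<Longrightarrow> 0 \<le> HH c4 c31 c22 c211 c1111 p a b"
    and V: "V \<ge> 0"
  shows "0 \<le> (c1111+c211+c31+c22+c4) * m^4 + (c211+c31+2*(c22+c4)) * m^2 * V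
    + (c22+c4) * V^2 + V * (c31*m*y + c4*y^2)"
proof -
  define s where "s = y - 2*m"
  define d where "d = sqrt (4*V + s^2)"
  have d0: "d \<ge> 0" unfolding d_def using V by simp
  have dsq: "d^2 = 4*V + s^2" unfolding d_def using V by simp
  show ?thesis
  proof (cases "d = 0")
    case True
    then have "V = 0" "s = 0" using dsq V by (auto simp: add_nonneg_eq_0_iff)
    then show ?thesis using H[of 0 "m" "m"] HH_param[of c4 c31 c22 c211 c1111 0 m 0]
      unfolding s_def by simp
  next
    case False
    then have dp: "d > 0" using d0 by simp
    have sd: "\<bar>s\<bar> \<le> d" using dsq V d0
      by (metis abs_of_nonneg add_increasing le_add_same_cancel2 mult_nonneg_nonneg real_sqrt_abs real_sqrt_le_iff d_def zero_le_numeral)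
    define p where "p = (1 - s/d)/2"
    have p01: "0 \<le> p" "p \<le> 1" unfolding p_def using sd dp by (auto simp: abs_le_iff field_simps)
    have e1: "(1-2*p)*d = s" unfolding p_def using dp by (simp add: field_simps)
    have e3: "p*(1-p)*d^2 = (d^2 - s^2)/4" unfolding p_def using dp by (simp add: field_simps power2_eq_square)
    have e2: "p*(1-p)*d^2 = V" using e3 dsq by simp
    show ?thesis using H[OF p01, of "m + (1-p)*d" "m - p*d"] HH_param[of c4 c31 c22 c211 c1111 p m d]
      unfolding e1 e2 s_def by simp
  qed
qed



lemma sqrt4: "u \<ge> 0 \<Longrightarrow> sqrt u ^ 4 = (u::real)^2"
proof -
  assume "u \<ge> 0"
  have "sqrt u ^ 4 = (sqrt u ^ 2) ^ 2" by (simp flip: power_mult)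
  then show ?thesis using \<open>u \<ge> 0\<close> by simp
qed

lemma core:
  fixes c4 c31 c22 c211 c1111 :: real
  defines "A \<equiv> c1111+c211+c31+c22+c4" and "B0 \<equiv> c211+c31+2*(c22+c4)" and "C \<equiv> c22+c4"
  assumes G: "\<And>m y V. V \<ge> 0 \<Longrightarrow> 0 \<le> A * m^4 + B0 * m^2 * V + C * V^2 + V * (c31*m*y + c4*y^2)"
  shows "\<exists>t. psd2 (c1111 + t) ((c211+c31-t)/2) (c22+c4) \<and> psd2 t (c31/2) c4"
proof -
  have C0: "C \<ge> 0" using G[of 1 0 0] by simp
  have A0: "A \<ge> 0" using G[of 0 1 0] by simp
  have c40: "c4 \<ge> 0"
  proof (rule ccontr)
    assume "\<not> c4 \<ge> 0"
    then have neg: "c4 < 0" by simp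
    define y where "y = max 1 ((\<bar>C\<bar>+1)/(-c4))"
    have y1: "y \<ge> 1" unfolding y_def by simp
    have "y^2 \<ge> y" using y1 by (simp add: power2_eq_square)
    then have "c4 * y^2 \<le> c4 * y" using neg by (simp add: mult_left_mono_neg)
    moreover have "c4 * y \<le> -(\<bar>C\<bar>+1)"
    proof -
      have "y \<ge> (\<bar>C\<bar>+1)/(-c4)" unfolding y_def by simp
      then have "y * (-c4) \<ge> \<bar>C\<bar>+1" using neg by (simp add: field_simps)
      then show ?thesis by (simp add: algebra_simps)
    qed
    moreover have "0 \<le> C + c4 * y^2" using G[of 1 0 y] by simp
    ultimately show False by linarith
  qed
  have c31z: "c31 = 0" if "c4 = 0"
  proof (rule ccontr)
    assume nz: "c31 \<noteq> 0"
    have "0 \<le> A + B0 + C + c31 * (-(A+B0+C+1)/c31)" using G[of 1 1 "-(A+B0+C+1)/c31"] that by simp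
    then show False using nz by simp
  qed
  define K where "K = c31^2/(4*c4)"
  define b where "b = B0 - K"
  have K0: "K \<ge> 0" unfolding K_def using c40 by simp
  have quad: "0 \<le> A*u^2 + b*u*V + C*V^2" if u: "u \<ge> 0" and V: "V \<ge> 0" for u V
  proof (cases "c4 = 0")
    case True
    then show ?thesis using G[of V "sqrt u" 0] c31z u V unfolding b_def K_def by (simp add: sqrt4)
  next
    case False
    then have cp: "c4 > 0" using c40 by simp
    define m where "m = sqrt u"
    have m2: "m^2 = u" unfolding m_def using u by simp
    have m4: "m^4 = u^2" unfolding m_def using u by (rule sqrt4)
    have e: "c31*m*(-c31*m/(2*c4)) + c4*(-c31*m/(2*c4))^2 = - K * u"
      unfolding K_def m2[symmetric] using cp by (simp add: field_simps power2_eq_square)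
    have "A * m^4 + B0 * m^2 * V + C * V^2 + V * (c31*m*(-c31*m/(2*c4)) + c4*(-c31*m/(2*c4))^2)
       = A*u^2 + b*u*V + C*V^2" unfolding e m4 m2 b_def by (simp add: algebra_simps)
    then show ?thesis using G[OF V, of m "-c31*m/(2*c4)"] by simp
  qed
  have disc: "b^2 \<le> 4*A*C" if bn: "b < 0"
  proof (cases "A = 0")
    case True
    have "0 \<le> A*((C+1)/(-b))^2 + b*((C+1)/(-b))*1 + C*1^2" using quad[of "(C+1)/(-b)" 1] bn C0 by (simp add: divide_nonneg_neg)
    then show ?thesis using True bn by simp
  next
    case False
    then have Ap: "A > 0" using A0 by simp
    have "0 \<le> A*(-b/(2*A))^2 + b*(-b/(2*A))*1 + C*1^2" using quad[of "-b/(2*A)" 1] bn Ap by (simp add: divide_neg_pos less_imp_le)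
    also have "\<dots> = C - b^2/(4*A)" using Ap by (simp add: field_simps power2_eq_square)
    finally show ?thesis using Ap by (simp add: field_simps)
  qed
  define mb where "mb = max 0 b"
  have mb0: "mb \<ge> 0" unfolding mb_def by simp
  define t where "t = K + mb"
  have "psd2 (c1111 + t) ((c211+c31-t)/2) (c22+c4)"
    unfolding psd2_def
  proof (intro allI)
    fix u v :: real
    define W where "W = v - u"
    have eq: "(c1111 + t) * u\<^sup>2 + 2 * ((c211 + c31 - t) / 2) * u * v + (c22 + c4) * v\<^sup>2
       = A*u^2 + (b - mb)*u*W + C*W^2"
      unfolding W_def A_def C_def t_def b_def B0_def by (simp add: field_simps power2_eq_square)
    show "0 \<le> (c1111 + t) * u\<^sup>2 + 2 * ((c211 + c31 - t) / 2) * u * v + (c22 + c4) * v\<^sup>2"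
      unfolding eq
    proof (cases "b \<ge> 0")
      case True then show "0 \<le> A*u^2 + (b - mb)*u*W + C*W^2" using A0 C0 by (simp add: mb_def)
    next
      case False
      then have bn: "b < 0" by simp
      have Ap: "A > 0" using disc[OF bn] C0 A0 bn
        by (metis less_eq_real_def mult_zero_left mult_zero_right not_less power2_less_0 zero_less_power2)
      have "4*A*(A*u^2 + b*u*W + C*W^2) = (2*A*u + b*W)^2 + (4*A*C - b^2)*W^2"
        by (simp add: algebra_simps power2_eq_square)
      also have "\<dots> \<ge> 0" using disc[OF bn] by simp
      finally have "0 \<le> 4*A*(A*u^2 + b*u*W + C*W^2)" .
      then have "0 \<le> A*u^2 + b*u*W + C*W^2" using Ap by (simp add: zero_le_mult_iff)
      then show "0 \<le> A*u^2 + (b - mb)*u*W + C*W^2" using bn by (simp add: mb_def)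
    qed
  qed
  moreover have "psd2 t (c31/2) c4"
    unfolding psd2_def
  proof (intro allI)
    fix u v :: real
    show "0 \<le> t * u\<^sup>2 + 2 * (c31 / 2) * u * v + c4 * v\<^sup>2"
    proof (cases "c4 = 0")
      case True
      then show ?thesis using c31z K0 mb0 unfolding t_def by simp
    next
      case False
      then have cp: "c4 > 0" using c40 by simp
      have "4*c4*(t * u\<^sup>2 + 2 * (c31 / 2) * u * v + c4 * v\<^sup>2) = (2*c4*v + c31*u)^2 + 4*c4*mb*u^2"
        unfolding t_def K_def using cp by (simp add: field_simps power2_eq_square)
      also have "\<dots> \<ge> 0" using cp mb0 by simp
      finally show ?thesis using cp by (simp add: zero_le_mult_iff)
    qed
  qed
  ultimately show ?thesis by blast
qed



definition quadf :: "nat \<Rightarrow> (nat \<Rightarrow> nat \<Rightarrow> real) \<Rightarrow> (nat \<Rightarrow> real) \<Rightarrow> real" where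
  "quadf n M x = (\<Sum>i<n. \<Sum>j<n. M i j * x i * x j)"

definition ee :: "nat \<Rightarrow> nat \<Rightarrow> nat \<Rightarrow> nat" where
  "ee i j = (\<lambda>k. (if k = i then 1 else 0) + (if k = j then 1 else 0))"

lemma prod_delta_pow: "i < (n::nat) \<Longrightarrow> (\<Prod>k<n. (x k :: real) ^ (if k = i then 1 else 0)) = x i"
proof -
  assume "i < n"
  have "(\<Prod>k<n. (x k :: real) ^ (if k = i then 1 else 0)) = (\<Prod>k<n. if k = i then x k else 1)"
    by (rule prod.cong) auto
  also have "\<dots> = x i" using \<open>i < n\<close> by (subst prod.delta) auto
  finally show ?thesis .
qed

lemma monom_ee: "i < n \<Longrightarrow> j < n \<Longrightarrow> monom n (ee i j) x = x i * x j"
  unfolding monom_def ee_def by (simp add: power_add prod.distrib prod_delta_pow)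

lemma quad_form: "is_form n 2 (quadf n M)"
proof -
  define I where "I = {..<n} \<times> {..<n}"
  define g where "g = (\<lambda>(i,j). ee i j)"
  define S where "S = g ` I"
  define c where "c a = (\<Sum>q\<in>{q. q \<in> I \<and> g q = a}. case_prod M q)" for a
  have fI: "finite I" unfolding I_def by simp
  have fS: "finite S" unfolding S_def using fI by simp
  have condS: "\<forall>a\<in>S. (\<forall>i. n \<le> i \<longrightarrow> a i = 0) \<and> (\<Sum>i<n. a i) = 2"
    unfolding S_def g_def I_def ee_def by (auto simp: sum.distrib)
  have "(\<Sum>a\<in>S. c a * monom n a x) = quadf n M x" for x
  proof -
    have "(\<Sum>a\<in>S. c a * monom n a x) = (\<Sum>a\<in>S. \<Sum>q\<in>{q. q \<in> I \<and> g q = a}. case_prod M q * monom n (g q) x)"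
      unfolding c_def sum_distrib_right by (intro sum.cong) auto
    also have "\<dots> = (\<Sum>q\<in>I. case_prod M q * monom n (g q) x)"
      by (rule sum.group) (use fI fS in \<open>auto simp: S_def\<close>)
    also have "\<dots> = (\<Sum>q\<in>I. case_prod (\<lambda>i j. M i j * x i * x j) q)"
      by (intro sum.cong) (auto simp: I_def g_def monom_ee)
    also have "\<dots> = quadf n M x"
      unfolding quadf_def I_def sum.cartesian_product ..
    finally show ?thesis .
  qed
  then show ?thesis unfolding is_form_def using fS condS by metis
qed



lemma quadf_add: "quadf n (\<lambda>i j. M1 i j + M2 i j) x = quadf n M1 x + quadf n M2 x"
  unfolding quadf_def by (simp add: algebra_simps sum.distrib)

lemma quadf_scale: "quadf n (\<lambda>i j. c * M i j) x = c * quadf n M x"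
  unfolding quadf_def by (simp add: algebra_simps sum_distrib_left)

lemma quadf_one: "quadf n (\<lambda>i j. 1) x = (\<Sum>i<n. x i)^2"
  unfolding quadf_def by (simp add: power2_eq_square sum_product)

lemma quadf_diag: "quadf n (\<lambda>i j. if i = j then 1 else 0) x = (\<Sum>i<n. x i ^ 2)"
proof -
  have "quadf n (\<lambda>i j. if i = j then 1 else 0) x = (\<Sum>i<n. \<Sum>j<n. if i = j then x i * x j else 0)"
    unfolding quadf_def by (intro sum.cong refl) auto
  also have "\<dots> = (\<Sum>i<n. x i ^ 2)" by (simp add: power2_eq_square)
  finally show ?thesis .
qed

lemma quadf_col: assumes "k < n" shows "quadf n (\<lambda>i j. if j = k then 1 else 0) x = (\<Sum>i<n. x i) * x k"
proof -
  have "quadf n (\<lambda>i j. if j = k then 1 else 0) x = (\<Sum>i<n. \<Sum>j<n. if j = k then x i * x j else 0)"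
    unfolding quadf_def by (intro sum.cong refl) auto
  also have "\<dots> = (\<Sum>i<n. x i * x k)" using assms by simp
  finally show ?thesis by (simp add: sum_distrib_right)
qed

lemma quadf_pt: assumes "k < n" shows "quadf n (\<lambda>i j. if i = k \<and> j = k then 1 else 0) x = x k ^ 2"
proof -
  have "quadf n (\<lambda>i j. if i = k \<and> j = k then 1 else 0) x = (\<Sum>i<n. if i = k then x i * x i else 0)"
    unfolding quadf_def
  proof (intro sum.cong refl)
    fix i assume "i \<in> {..<n}"
    have "(\<Sum>j<n. (if i = k \<and> j = k then 1 else 0) * x i * x j) = (\<Sum>j<n. if j = k then (if i = k then x i * x k else 0) else 0)"
      by (intro sum.cong refl) auto
    also have "\<dots> = (if i = k then x i * x i else 0)" using assms by (subst sum.delta) auto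
    finally show "(\<Sum>j<n. (if i = k \<and> j = k then 1 else 0) * x i * x j) = (if i = k then x i * x i else 0)" .
  qed
  also have "\<dots> = x k ^ 2" using assms by (subst sum.delta) (auto simp: power2_eq_square)
  finally show ?thesis .
qed

lemma gA_quad: "\<exists>M. \<forall>x. \<alpha> * psum n 1 x ^ 2 + \<beta> * psum n 2 x = quadf n M x"
proof -
  define M :: "nat \<Rightarrow> nat \<Rightarrow> real" where "M = (\<lambda>i j. (\<alpha> / real n ^ 2) * 1 + (\<beta> / real n) * (if i = j then 1 else 0))"
  have "\<alpha> * psum n 1 x ^ 2 + \<beta> * psum n 2 x = quadf n M x" for x
    unfolding M_def quadf_add quadf_scale quadf_one quadf_diag psum_def
    by (simp add: power_mult_distrib power_divide)
  then show ?thesis by blast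
qed

lemma gB_quad: assumes "k < n"
  shows "\<exists>M. \<forall>x. s * (psum n 1 x * (x k - psum n 1 x)) + t * (x k ^ 2 - psum n 2 x) = quadf n M x"
proof -
  define M :: "nat \<Rightarrow> nat \<Rightarrow> real" where "M = (\<lambda>i j. (s / real n) * (if j = k then 1 else 0) + ((- s / real n ^ 2) * 1
     + (t * (if i = k \<and> j = k then 1 else 0) + (- t / real n) * (if i = j then 1 else 0))))"
  have "s * (psum n 1 x * (x k - psum n 1 x)) + t * (x k ^ 2 - psum n 2 x) = quadf n M x" for x
    unfolding M_def quadf_add quadf_scale quadf_one quadf_diag quadf_col[OF assms] quadf_pt[OF assms] psum_def
    by (simp add: power_mult_distrib power_divide algebra_simps power2_eq_square)
  then show ?thesis by blast
qed

lemma psd2_sq: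
  assumes "psd2 a b c"
  shows "a * u^2 + 2*b*u*v + c*v^2 = (sqrt a * u + b / sqrt a * v)^2 + (sqrt (c - b^2/a) * v)^2"
proof -
  have a0: "a \<ge> 0" using assms[unfolded psd2_def, rule_format, of 1 0] by simp
  have c0: "c \<ge> 0" using assms[unfolded psd2_def, rule_format, of 0 1] by simp
  have det: "a * (a*c - b^2) \<ge> 0" using assms[unfolded psd2_def, rule_format, of b "-a"]
    by (simp add: algebra_simps power2_eq_square)
  show ?thesis
  proof (cases "a = 0")
    case True
    have "b = 0"
    proof (rule ccontr)
      assume "b \<noteq> 0"
      have "0 \<le> 2*b*(-(c+1)/(2*b))*1 + c*1^2" using assms[unfolded psd2_def, rule_format, of "-(c+1)/(2*b)" 1] True by simp
      then show False using \<open>b \<noteq> 0\<close> by (simp add: field_simps)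
    qed
    then show ?thesis using True c0 by (simp add: power_mult_distrib)
  next
    case False
    then have ap: "a > 0" using a0 by simp
    have "c - b^2/a \<ge> 0" using det ap by (simp add: field_simps zero_le_mult_iff)
    then show ?thesis using ap
      by (simp add: power_mult_distrib power2_sum power_divide field_simps) (simp add: power2_eq_square algebra_simps)
  qed
qed



lemma B_ident:
  assumes n: "n > 0"
  shows "b11*(p_211 n x - p_1111 n x) + 2*b12*(p_31 n x - p_211 n x) + b22*(p_4 n x - p_22 n x)
    = (1 / real n) * (\<Sum>j<n. b11 * (psum n 1 x * (x j - psum n 1 x))^2
        + 2*b12 * (psum n 1 x * (x j - psum n 1 x)) * (x j ^ 2 - psum n 2 x) + b22 * (x j ^ 2 - psum n 2 x)^2)"
proof -
  define P1 where "P1 = psum n 1 x"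
  define P2 where "P2 = psum n 2 x"
  define e0 where "e0 = b11*P1^4 + 2*b12*P1^2*P2 + b22*P2^2"
  define e1 where "e1 = -2*b11*P1^3 - 2*b12*P1*P2"
  define e2 where "e2 = b11*P1^2 - 2*b12*P1^2 - 2*b22*P2"
  define e3 where "e3 = 2*b12*P1"
  define e4 where "e4 = b22"
  have S: "(\<Sum>j<n. x j ^ i) = real n * psum n i x" for i
    unfolding psum_def using n by simp
  have "(\<Sum>j<n. b11 * (P1 * (x j - P1))^2 + 2*b12 * (P1 * (x j - P1)) * (x j ^ 2 - P2) + b22 * (x j ^ 2 - P2)^2)
      = (\<Sum>j<n. e0 * x j ^ 0 + e1 * x j ^ 1 + e2 * x j ^ 2 + e3 * x j ^ 3 + e4 * x j ^ 4)"
    unfolding e0_def e1_def e2_def e3_def e4_def by (intro sum.cong refl) algebra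
  also have "\<dots> = e0 * (\<Sum>j<n. x j ^ 0) + e1 * (\<Sum>j<n. x j ^ 1) + e2 * (\<Sum>j<n. x j ^ 2) + e3 * (\<Sum>j<n. x j ^ 3) + e4 * (\<Sum>j<n. x j ^ 4)"
    by (simp only: sum.distrib sum_distrib_left)
  also have "\<dots> = real n * (e0 * psum n 0 x + e1 * P1 + e2 * P2 + e3 * psum n 3 x + e4 * psum n 4 x)"
    unfolding S P1_def P2_def by (simp add: algebra_simps)
  finally have eq: "(1 / real n) * (\<Sum>j<n. b11 * (P1 * (x j - P1))^2 + 2*b12 * (P1 * (x j - P1)) * (x j ^ 2 - P2) + b22 * (x j ^ 2 - P2)^2)
     = e0 * psum n 0 x + e1 * P1 + e2 * P2 + e3 * psum n 3 x + e4 * psum n 4 x" using n by simp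
  have p0: "psum n 0 x = 1" unfolding psum_def using n by simp
  show ?thesis
    unfolding P1_def[symmetric] P2_def[symmetric] eq p0
    unfolding p_211_def p_1111_def p_31_def p_4_def p_22_def P1_def[symmetric] P2_def[symmetric]
      e0_def e1_def e2_def e3_def e4_def
    by algebra
qed



lemma form_of_quad: "(\<exists>M. \<forall>x. g x = quadf n M x) \<Longrightarrow> \<exists>d. is_form n d g"
proof -
  assume "\<exists>M. \<forall>x. g x = quadf n M x"
  then obtain M where M: "\<forall>x. g x = quadf n M x" by blast
  then have "g = quadf n M" by auto
  then show ?thesis using quad_form by blast
qed

lemma sum_list_upt_sq: "(\<Sum>g\<leftarrow>map h [0..<n]. (g x)^2) = (\<Sum>j<n. (h j x)^2)"
proof -
  have "(\<Sum>g\<leftarrow>map h [0..<n]. (g x)^2) = sum_list (map (\<lambda>j. (h j x)^2) [0..<n])"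
    by (simp add: comp_def)
  also have "\<dots> = sum (\<lambda>j. (h j x)^2) (set [0..<n])"
    by (rule sum_set_upt_conv_sum_list_nat[symmetric])
  also have "set [0..<n] = {..<n}" by auto
  finally show ?thesis .
qed

lemma if_dir:
  assumes A: "psd2 a11 a12 a22" and B: "psd2 b11 b12 b22" and n: "n > 0"
    and eq: "\<forall>x. f x = a11 * p_1111 n x + 2 * a12 * p_211 n x + a22 * p_22 n x
          + b11 * (p_211 n x - p_1111 n x) + 2 * b12 * (p_31 n x - p_211 n x)
          + b22 * (p_4 n x - p_22 n x)"
  shows "is_sos n f"
proof -
  define g1 where "g1 = (\<lambda>x. sqrt a11 * psum n 1 x ^ 2 + a12 / sqrt a11 * psum n 2 x)"
  define g2 where "g2 = (\<lambda>x. 0 * psum n 1 x ^ 2 + sqrt (a22 - a12^2/a11) * psum n 2 x)"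
  define h1 where "h1 = (\<lambda>j x. (sqrt (1/real n) * sqrt b11) * (psum n 1 x * (x j - psum n 1 x))
      + (sqrt (1/real n) * (b12 / sqrt b11)) * (x j ^ 2 - psum n 2 x))"
  define h2 where "h2 = (\<lambda>j x. 0 * (psum n 1 x * (x j - psum n 1 x))
      + (sqrt (1/real n) * sqrt (b22 - b12^2/b11)) * (x j ^ 2 - psum n 2 x))"
  define gs where "gs = [g1, g2] @ map h1 [0..<n] @ map h2 [0..<n]"
  have f1: "\<exists>d. is_form n d g1" unfolding g1_def by (rule form_of_quad, rule gA_quad)
  have f2: "\<exists>d. is_form n d g2" unfolding g2_def by (rule form_of_quad, rule gA_quad)
  have fh1: "\<exists>d. is_form n d (h1 j)" if "j < n" for j
    unfolding h1_def by (rule form_of_quad, rule gB_quad[OF that])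
  have fh2: "\<exists>d. is_form n d (h2 j)" if "j < n" for j
    unfolding h2_def by (rule form_of_quad, rule gB_quad[OF that])
  have forms: "\<forall>g\<in>set gs. \<exists>d. is_form n d g"
    unfolding gs_def using f1 f2 fh1 fh2 by auto
  have "f x = (\<Sum>g\<leftarrow>gs. (g x)^2)" for x
  proof -
    define P1 where "P1 = psum n 1 x"
    define P2 where "P2 = psum n 2 x"
    have Apart: "a11 * p_1111 n x + 2 * a12 * p_211 n x + a22 * p_22 n x = (g1 x)^2 + (g2 x)^2"
    proof -
      have "a11 * p_1111 n x + 2 * a12 * p_211 n x + a22 * p_22 n x = a11 * (P1^2)^2 + 2*a12*(P1^2)*P2 + a22*P2^2"
        unfolding p_1111_def p_211_def p_22_def P1_def P2_def by (simp add: power2_eq_square algebra_simps)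
      also have "\<dots> = (g1 x)^2 + (g2 x)^2" unfolding psd2_sq[OF A] g1_def g2_def P1_def P2_def by simp
      finally show ?thesis .
    qed
    have Bpart: "b11 * (p_211 n x - p_1111 n x) + 2 * b12 * (p_31 n x - p_211 n x) + b22 * (p_4 n x - p_22 n x)
       = (\<Sum>j<n. (h1 j x)^2) + (\<Sum>j<n. (h2 j x)^2)"
    proof -
      have "(h1 j x)^2 + (h2 j x)^2 = (1/real n) * (b11 * (psum n 1 x * (x j - psum n 1 x))^2
        + 2*b12 * (psum n 1 x * (x j - psum n 1 x)) * (x j ^ 2 - psum n 2 x) + b22 * (x j ^ 2 - psum n 2 x)^2)" for j
      proof -
        have s: "sqrt (1/real n) ^ 2 = 1 / real n" by simp
        have "(h1 j x)^2 + (h2 j x)^2 = sqrt (1/real n) ^ 2 * ((sqrt b11 * (psum n 1 x * (x j - psum n 1 x)) + b12 / sqrt b11 * (x j ^ 2 - psum n 2 x))^2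
           + (sqrt (b22 - b12^2/b11) * (x j ^ 2 - psum n 2 x))^2)"
        proof -
          define r where "r = sqrt (1/real n)"
          define U where "U = sqrt b11 * (psum n 1 x * (x j - psum n 1 x)) + b12 / sqrt b11 * (x j ^ 2 - psum n 2 x)"
          define W where "W = sqrt (b22 - b12^2/b11) * (x j ^ 2 - psum n 2 x)"
          have e1: "h1 j x = r * U" unfolding h1_def U_def r_def by (simp add: algebra_simps)
          have e2: "h2 j x = r * W" unfolding h2_def W_def r_def by (simp add: algebra_simps)
          show ?thesis unfolding e1 e2 r_def[symmetric] U_def[symmetric] W_def[symmetric]
            by (simp add: power_mult_distrib algebra_simps)
        qed
        also have "\<dots> = (1/real n) * (b11 * (psum n 1 x * (x j - psum n 1 x))^2
          + 2*b12 * (psum n 1 x * (x j - psum n 1 x)) * (x j ^ 2 - psum n 2 x) + b22 * (x j ^ 2 - psum n 2 x)^2)"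
          unfolding s psd2_sq[OF B, symmetric] ..
        finally show ?thesis .
      qed
      then have "(\<Sum>j<n. (h1 j x)^2) + (\<Sum>j<n. (h2 j x)^2) = (1/real n) * (\<Sum>j<n. b11 * (psum n 1 x * (x j - psum n 1 x))^2
        + 2*b12 * (psum n 1 x * (x j - psum n 1 x)) * (x j ^ 2 - psum n 2 x) + b22 * (x j ^ 2 - psum n 2 x)^2)"
        by (simp add: sum.distrib[symmetric] sum_distrib_left)
      then show ?thesis using B_ident[OF n] by simp
    qed
    have "(\<Sum>g\<leftarrow>gs. (g x)^2) = (g1 x)^2 + (g2 x)^2 + (\<Sum>j<n. (h1 j x)^2) + (\<Sum>j<n. (h2 j x)^2)"
      unfolding gs_def by (simp add: sum_list_upt_sq[of _ _ n, simplified])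
    then show ?thesis using eq Apart Bpart by simp
  qed
  then show ?thesis unfolding is_sos_def using forms by blast
qed

theorem corollary6p2:
  fixes c4 c31 c22 c211 c1111 :: real
  shows "in_S4 (mseq c4 c31 c22 c211 c1111) \<longleftrightarrow>
    (\<exists>a11 a12 a22 b11 b12 b22 :: real.
       psd2 a11 a12 a22 \<and> psd2 b11 b12 b22 \<and>
       (\<forall>n\<ge>4. \<forall>x. mseq c4 c31 c22 c211 c1111 n x =
            a11 * p_1111 n x + 2 * a12 * p_211 n x + a22 * p_22 n x
          + b11 * (p_211 n x - p_1111 n x) + 2 * b12 * (p_31 n x - p_211 n x)
          + b22 * (p_4 n x - p_22 n x)))"
proof
  assume S: "in_S4 (mseq c4 c31 c22 c211 c1111)"
  have nn: "0 \<le> mseq c4 c31 c22 c211 c1111 n x" if "n \<ge> 4" for n x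
  proof -
    have "is_sos n (mseq c4 c31 c22 c211 c1111 n)" using S that unfolding in_S4_def by blast
    then obtain gs where "\<forall>x. mseq c4 c31 c22 c211 c1111 n x = (\<Sum>g\<leftarrow>gs. (g x)^2)"
      unfolding is_sos_def by blast
    then show ?thesis by (auto intro!: sum_list_nonneg)
  qed
  have H1: "0 \<le> HH c4 c31 c22 c211 c1111 (real k / real n) a b" if "n \<ge> 4" "k \<le> n" for n k a b
    using nn[OF that(1), of "\<lambda>j. if j < k then a else b"] mseq_two[OF that(2)] that by simp
  have H2: "0 \<le> HH c4 c31 c22 c211 c1111 p a b" if "0 \<le> p" "p \<le> 1" for p a b
    by (rule HH_dense[OF H1 that])
  obtain t where t: "psd2 (c1111 + t) ((c211+c31-t)/2) (c22+c4)" "psd2 t (c31/2) c4"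
    using core[of c1111 c211 c31 c22 c4] GL[OF H2] by blast
  show "\<exists>a11 a12 a22 b11 b12 b22 :: real.
       psd2 a11 a12 a22 \<and> psd2 b11 b12 b22 \<and>
       (\<forall>n\<ge>4. \<forall>x. mseq c4 c31 c22 c211 c1111 n x =
            a11 * p_1111 n x + 2 * a12 * p_211 n x + a22 * p_22 n x
          + b11 * (p_211 n x - p_1111 n x) + 2 * b12 * (p_31 n x - p_211 n x)
          + b22 * (p_4 n x - p_22 n x))"
    apply (rule exI[of _ "c1111 + t"], rule exI[of _ "(c211+c31-t)/2"], rule exI[of _ "c22+c4"])
    apply (rule exI[of _ t], rule exI[of _ "c31/2"], rule exI[of _ c4])
    using t by (simp add: mseq_def field_simps)
next
  assume "\<exists>a11 a12 a22 b11 b12 b22 :: real.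
       psd2 a11 a12 a22 \<and> psd2 b11 b12 b22 \<and>
       (\<forall>n\<ge>4. \<forall>x. mseq c4 c31 c22 c211 c1111 n x =
            a11 * p_1111 n x + 2 * a12 * p_211 n x + a22 * p_22 n x
          + b11 * (p_211 n x - p_1111 n x) + 2 * b12 * (p_31 n x - p_211 n x)
          + b22 * (p_4 n x - p_22 n x))"
  then obtain a11 a12 a22 b11 b12 b22 where A: "psd2 a11 a12 a22" and B: "psd2 b11 b12 b22"
    and eq: "\<forall>n\<ge>4. \<forall>x. mseq c4 c31 c22 c211 c1111 n x =
            a11 * p_1111 n x + 2 * a12 * p_211 n x + a22 * p_22 n x
          + b11 * (p_211 n x - p_1111 n x) + 2 * b12 * (p_31 n x - p_211 n x)
          + b22 * (p_4 n x - p_22 n x)" by blast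
  show "in_S4 (mseq c4 c31 c22 c211 c1111)"
    unfolding in_S4_def
  proof (intro allI impI)
    fix n :: nat assume "n \<ge> 4"
    then show "is_sos n (mseq c4 c31 c22 c211 c1111 n)"
      using if_dir[OF A B, of n] eq by simp
  qed
qed

end
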